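(* For an integer $k\ge1$ and a structure function $s$ (as defined in the context) of a unit vector with at most $k$ nonzero entries, define $$ A(s) := \max_{1\le p \le k} p\, s^2(p),\qquad B(s) := \min_{1\le p \le k} \max\{p^2s^2(p),\ k\, s(p)\}. $$ Then: (i) for every such structure function $s$, $A(s)\le B(s)$; (ii) there exists a sequence of unit vectors $\mathbf{v}^{(k)}$, $k=1,2,\dots$, with $\mathbf{v}^{(k)}$ having at most $k$ nonzero entries and structure function $s_k$, such that $\lim_{k\to\infty} B(s_k)/A(s_k)=\infty$.
   Context: For a unit vector $\mathbf{v}\in\mathbb{R}^n$ with at most $k$ nonzero entries, let $v_{(1)}\ge v_{(2)}\ge\cdots$ be the absolute values of its entries sorted in decreasing order, and define its signal-energy structure function $s(p)=\big(\sum_{i=1}^p v_{(i)}^2\big)^{-1}$ for $1\le p\le k$. *)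

theory Defs
  imports Complex_Main
begin

text \<open>A vector in R^n is represented as a real list of length n.\<close>

definition unit_vec :: "real list \<Rightarrow> bool" where
  "unit_vec v \<longleftrightarrow> (\<Sum>x\<leftarrow>v. x ^ 2) = 1"

definition nnz :: "real list \<Rightarrow> nat" where
  "nnz v = length (filter (\<lambda>x. x \<noteq> 0) v)"

definition sorted_abs :: "real list \<Rightarrow> real list" where
  "sorted_abs v = rev (sort (map abs v))"

text \<open>(Entries beyond the dimension count as 0, i.e. R^n is padded.) Signal-energy structure function s(p) = (sum_{i=1}^p v_(i)^2)^(-1).\<close>
definition sfun :: "real list \<Rightarrow> nat \<Rightarrow> real" where
  "sfun v p = inverse (\<Sum>x\<leftarrow>take p (sorted_abs v). x ^ 2)"

definition A_val :: "nat \<Rightarrow> (nat \<Rightarrow> real) \<Rightarrow> real" where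
  "A_val k s = Max ((\<lambda>p. real p * (s p) ^ 2) ` {1..k})"

definition B_val :: "nat \<Rightarrow> (nat \<Rightarrow> real) \<Rightarrow> real" where
  "B_val k s = Min ((\<lambda>p. max ((real p) ^ 2 * (s p) ^ 2) (real k * s p)) ` {1..k})"

end

theory Submission
  imports Defs "HOL-Library.Multiset" "HOL-Library.Discrete_Functions"
begin

lemma avg_mono:
  fixes g :: "nat \<Rightarrow> real"
  assumes anti: "\<And>i j. i \<le> j \<Longrightarrow> g j \<le> g i" and pq: "p \<le> q"
  shows "real p * (\<Sum>i<q. g i) \<le> real q * (\<Sum>i<p. g i)"
proof -
  have split: "(\<Sum>i<q. g i) = (\<Sum>i<p. g i) + (\<Sum>i\<in>{p..<q}. g i)"
    using pq by (metis atLeast0LessThan sum.atLeastLessThan_concat zero_le)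
  have R: "(\<Sum>i\<in>{p..<q}. g i) \<le> real (q - p) * g p"
    using sum_bounded_above[of "{p..<q}" g "g p"] anti by auto
  have L: "real p * g p \<le> (\<Sum>i<p. g i)"
    using sum_bounded_below[of "{..<p}" "g p" g] anti by auto
  have "real p * (\<Sum>i<q. g i) = real p * (\<Sum>i<p. g i) + real p * (\<Sum>i\<in>{p..<q}. g i)"
    by (simp add: split algebra_simps)
  also have "\<dots> \<le> real p * (\<Sum>i<p. g i) + real p * (real (q - p) * g p)"
    using R by (intro add_left_mono mult_left_mono) auto
  also have "\<dots> = real p * (\<Sum>i<p. g i) + real (q - p) * (real p * g p)"
    by (simp add: algebra_simps)
  also have "\<dots> \<le> real p * (\<Sum>i<p. g i) + real (q - p) * (\<Sum>i<p. g i)"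
    using L by (intro add_left_mono mult_left_mono) auto
  also have "\<dots> = real q * (\<Sum>i<p. g i)"
    using pq by (simp add: of_nat_diff algebra_simps)
  finally show ?thesis .
qed

lemma part_i_abstract:
  fixes g :: "nat \<Rightarrow> real"
  assumes anti: "\<And>i j. i \<le> j \<Longrightarrow> g j \<le> g i" and nn: "\<And>i. g i \<ge> 0"
    and tot: "(\<Sum>i<k. g i) = 1" and g0: "g 0 > 0" and k: "k \<ge> 1"
  shows "A_val k (\<lambda>p. inverse (\<Sum>i<p. g i)) \<le> B_val k (\<lambda>p. inverse (\<Sum>i<p. g i))"
proof -
  define S where "S p = (\<Sum>i<p. g i)" for p
  have Spos: "S p > 0" if "p \<ge> 1" for p
  proof -
    have "g 0 \<le> S p" unfolding S_def
      using that nn by (intro member_le_sum) auto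
    thus ?thesis using g0 by linarith
  qed
  have Smono: "S p \<le> S q" if "p \<le> q" for p q
    unfolding S_def using that nn by (intro sum_mono2) auto
  have key: "real p * (inverse (S p))^2 \<le> max ((real q)^2 * (inverse (S q))^2) (real k * inverse (S q))"
    if p: "p \<in> {1..k}" and q: "q \<in> {1..k}" for p q
  proof (cases "q \<le> p")
    case True
    have Sk: "S k = 1" using tot S_def by simp
    have a: "real p * S k \<le> real k * S p" using avg_mono[OF anti] p unfolding S_def by auto
    have sp: "S p > 0" "S q > 0" using p q Spos by auto
    have sqp: "S q \<le> S p" using Smono True by auto
    have "real p * (inverse (S p))^2 = (real p / S p) / S p" by (simp add: power2_eq_square field_simps)
    also have "\<dots> \<le> real k / S p" using a Sk sp
      by (intro divide_right_mono) (auto simp: field_simps)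
    also have "\<dots> \<le> real k / S q" using sp sqp
      by (intro divide_left_mono) auto
    finally show ?thesis by (simp add: field_simps)
  next
    case False
    have a: "real p * S q \<le> real q * S p" using avg_mono[OF anti, where p=p and q=q] False unfolding S_def by auto
    have sp: "S p > 0" "S q > 0" using p q Spos by auto
    have pp: "real p \<ge> 1" using p by auto
    have b: "1 / S p \<le> real q / (real p * S q)" using a sp pp
      by (simp add: field_simps)
    have "real p * (inverse (S p))^2 = real p * (1 / S p)^2" by (simp add: field_simps)
    also have "\<dots> \<le> real p * (real q / (real p * S q))^2"
      using b sp by (intro mult_left_mono power_mono) auto
    also have "\<dots> = (real q)^2 / (real p * (S q)^2)" using pp by (simp add: power2_eq_square field_simps)
    also have "\<dots> \<le> (real q)^2 / ((S q)^2)" using pp sp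
      by (intro divide_left_mono) (auto simp: field_simps)
    finally show ?thesis by (simp add: field_simps)
  qed
  have ne: "{1..k} \<noteq> {}" using k by auto
  show ?thesis unfolding A_val_def B_val_def S_def[symmetric]
    using key ne by (auto simp: Max_le_iff Min_ge_iff)
qed

lemma sum_take_g:
  fixes w :: "real list"
  shows "(\<Sum>x\<leftarrow>take p w. x ^ 2) = (\<Sum>i<p. (if i < length w then (w!i)^2 else 0))"
proof -
  have "(\<Sum>x\<leftarrow>take p w. x ^ 2) = (\<Sum>i<length (take p w). (map (\<lambda>x. x^2) (take p w)) ! i)"
    by (simp add: sum_list_sum_nth atLeast0LessThan)
  also have "\<dots> = (\<Sum>i<min p (length w). (w!i)^2)"
    by (intro sum.cong) auto
  also have "\<dots> = (\<Sum>i<p. (if i < length w then (w!i)^2 else 0))"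
    by (rule sum.mono_neutral_cong_left) auto
  finally show ?thesis .
qed

lemma sorted_abs_props:
  fixes v :: "real list"
  defines "w \<equiv> sorted_abs v"
  shows "\<And>i j. i \<le> j \<Longrightarrow> j < length w \<Longrightarrow> w ! j \<le> w ! i"
    and "\<And>i. i < length w \<Longrightarrow> w ! i \<ge> 0"
    and "(\<Sum>x\<leftarrow>w. x ^ 2) = (\<Sum>x\<leftarrow>v. x ^ 2)"
    and "length (filter (\<lambda>x. x \<noteq> 0) w) = nnz v"
proof -
  have sw: "sorted (rev w)" unfolding w_def sorted_abs_def by simp
  show "w ! j \<le> w ! i" if "i \<le> j" "j < length w" for i j
  proof -
    have "rev w ! (length w - Suc j) \<le> rev w ! (length w - Suc i)"
      using sw that by (intro sorted_nth_mono) auto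
    thus ?thesis using that by (simp add: rev_nth)
  qed
  show "w ! i \<ge> 0" if "i < length w" for i
  proof -
    have "w ! i \<in> set w" using that by simp
    thus ?thesis unfolding w_def sorted_abs_def by auto
  qed
  have m: "mset w = mset (map abs v)" unfolding w_def sorted_abs_def by simp
  have "(\<Sum>x\<leftarrow>w. x ^ 2) = sum_mset (image_mset (\<lambda>x. x^2) (mset w))"
    by (simp only: mset_map[symmetric] sum_mset_sum_list)
  also have "\<dots> = sum_mset (image_mset (\<lambda>x. x^2) (mset (map abs v)))" using m by simp
  also have "\<dots> = (\<Sum>x\<leftarrow>v. x ^ 2)" 
  proof -
    have "image_mset (\<lambda>x. x^2) (mset (map abs v)) = mset (map (\<lambda>x. x^2) (map abs v))"
      by (simp only: mset_map)
    hence "sum_mset (image_mset (\<lambda>x. x^2) (mset (map abs v))) = sum_list (map (\<lambda>x. x^2) (map abs v))"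
      by (simp only: sum_mset_sum_list)
    thus ?thesis by (simp add: comp_def)
  qed
  finally show "(\<Sum>x\<leftarrow>w. x ^ 2) = (\<Sum>x\<leftarrow>v. x ^ 2)" .
  have "length (filter (\<lambda>x. x \<noteq> 0) w) = size (filter_mset (\<lambda>x. x \<noteq> 0) (mset w))"
    by (metis mset_filter size_mset)
  also have "\<dots> = size (filter_mset (\<lambda>x. x \<noteq> 0) (mset (map abs v)))" using m by simp
  also have "\<dots> = length (filter (\<lambda>x. x \<noteq> 0) (map abs v))"
    by (metis mset_filter size_mset)
  also have "\<dots> = nnz v" unfolding nnz_def by (simp add: comp_def)
  finally show "length (filter (\<lambda>x. x \<noteq> 0) w) = nnz v" .
qed

lemma part_i_g:
  fixes v :: "real list"
  defines "w \<equiv> sorted_abs v"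
  defines "g \<equiv> (\<lambda>i. if i < length w then (w!i)^2 else 0)"
  assumes u: "unit_vec v" and nz: "nnz v \<le> k"
  shows "\<And>i j. i \<le> j \<Longrightarrow> g j \<le> g i" and "\<And>i. g i \<ge> 0"
    and "(\<Sum>i<k. g i) = 1" and "g 0 > 0" and "sfun v = (\<lambda>p. inverse (\<Sum>i<p. g i))"
proof -
  note P = sorted_abs_props[where v=v, folded w_def]
  show anti: "g j \<le> g i" if "i \<le> j" for i j
  proof (cases "j < length w")
    case True
    then show ?thesis unfolding g_def using P(1)[OF that True] P(2)[OF True] that
      by (auto intro: power_mono)
  qed (auto simp: g_def)
  show nn: "g i \<ge> 0" for i by (simp add: g_def)
  show sf: "sfun v = (\<lambda>p. inverse (\<Sum>i<p. g i))"
    unfolding sfun_def g_def w_def using sum_take_g by (auto intro!: ext)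
  have zero: "g i = 0" if "i \<ge> k" for i
  proof (rule ccontr)
    assume ne: "g i \<noteq> 0"
    hence il: "i < length w" and wi: "w ! i \<noteq> 0" unfolding g_def by (auto split: if_splits)
    have "{..i} \<subseteq> {j. j < length w \<and> w ! j \<noteq> 0}"
    proof
      fix j assume "j \<in> {..i}"
      hence "j \<le> i" by auto
      hence "w ! i \<le> w ! j" using P(1) il by auto
      moreover have "w ! i > 0" using P(2)[OF il] wi by auto
      ultimately show "j \<in> {j. j < length w \<and> w ! j \<noteq> 0}" using \<open>j \<le> i\<close> il by auto
    qed
    hence "card {..i} \<le> card {j. j < length w \<and> w ! j \<noteq> 0}"
      by (intro card_mono) auto
    also have "\<dots> = nnz v" using P(4) by (simp add: length_filter_conv_card)
    finally show False using nz that by simp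
  qed
  have "(\<Sum>i<k. g i) = (\<Sum>i<length w. g i)"
  proof (rule sum.mono_neutral_cong)
    fix i assume "i \<in> {..<length w} - {..<k}" thus "g i = 0" using zero by auto
  next
    fix i assume "i \<in> {..<k} - {..<length w}" thus "g i = 0" by (auto simp: g_def)
  qed auto
  also have "\<dots> = (\<Sum>x\<leftarrow>w. x ^ 2)"
    by (simp add: sum_list_sum_nth atLeast0LessThan g_def)
  also have "\<dots> = 1" using P(3) u unfolding unit_vec_def by simp
  finally show tot: "(\<Sum>i<k. g i) = 1" .
  show "g 0 > 0"
  proof (rule ccontr)
    assume "\<not> g 0 > 0"
    hence "g 0 = 0" using nn[of 0] by auto
    hence "\<And>i. g i = 0" using anti nn by (metis antisym zero_le)
    thus False using tot by simp
  qed
qed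

lemma constr:
  fixes n m k :: nat
  assumes n2: "n \<ge> 2" and k4: "n^4 \<le> k" and mdef: "m = k div n"
  defines "a \<equiv> 1 / real n"
  defines "b \<equiv> (1 - a) / real m"
  defines "v \<equiv> sqrt a # replicate m (sqrt b)"
  shows "unit_vec v" "nnz v \<le> k" "A_val k (sfun v) \<le> 2 * real k" "A_val k (sfun v) > 0"
    "B_val k (sfun v) \<ge> real n * real k / 16"
proof -
  define N where "N = real n"
  define M where "M = real m"
  define K where "K = real k"
  have N2: "N \<ge> 2" using n2 N_def by simp
  have kn: "k = m * n + k mod n" using mdef by simp
  have r: "k mod n < n" using n2 by simp
  have n4: "n * n \<le> n^4" using n2 by (simp add: power_def)
  have "2 * n \<le> n * n" using n2 by simp
  hence k2n: "2 * n \<le> k" using k4 n4 by linarith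
  have "n^3 = n^4 div n" proof -
    have "n^4 = n^3 * n" by (simp add: power_Suc2[symmetric])
    thus ?thesis using n2 by simp
  qed
  also have "\<dots> \<le> m" unfolding mdef using k4 by (rule div_le_mono)
  finally have "n^3 \<le> m" .
  moreover have "n \<le> n^3" using n2 by (simp add: power3_eq_cube)
  ultimately have mn: "n \<le> m" by linarith
  have MN: "M \<ge> N" using mn M_def N_def by simp
  have MNK: "M * N \<le> K" using kn M_def N_def K_def
    by (metis of_nat_le_iff of_nat_mult le_add1)
  have MNK2: "K \<le> 2 * M * N"
  proof -
    have "m \<le> m * n" using n2 by simp
    hence "k mod n \<le> m * n" using r mn by linarith
    hence "k \<le> 2 * (m * n)" using kn by linarith
    thus ?thesis unfolding M_def N_def K_def by (metis of_nat_le_iff of_nat_mult of_nat_numeral mult.assoc)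
  qed
  have KN4: "K \<ge> N^4" using k4 unfolding K_def N_def by (metis of_nat_le_iff of_nat_power)
  have Mpos: "M > 0" using MN N2 by linarith
  have aN: "a = 1 / N" using a_def N_def by simp
  have bN: "b = (N - 1) / (N * M)" using b_def a_def N_def M_def N2 by (simp add: field_simps)
  have apos: "a > 0" using aN N2 by simp
  have bpos: "b > 0" using bN N2 Mpos by simp
  have "N * N \<le> M * N" using MN N2 by (intro mult_right_mono) auto
  hence "N * N \<le> N + M * N" using N2 by linarith
  hence ab: "b \<le> a" unfolding aN bN using MN N2 Mpos by (simp add: field_simps)
  have sum1: "a + M * b = 1" unfolding aN bN using N2 Mpos by (simp add: field_simps)
  show "unit_vec v" unfolding unit_vec_def v_def using apos bpos sum1 M_def
    by (simp add: sum_list_replicate)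
  show "nnz v \<le> k" proof -
    have "nnz v \<le> length v" unfolding nnz_def by simp
    also have "length v = m + 1" by (simp add: v_def)
    also have "m + 1 \<le> k"
    proof -
      have "m * 2 \<le> m * n" using n2 by simp
      moreover have "m * n \<le> k" using kn by linarith
      moreover have "m \<ge> 1" using mn n2 by linarith
      ultimately show ?thesis by linarith
    qed
    finally show ?thesis .
  qed
  have sa: "sorted_abs v = v"
  proof -
    have 1: "map abs v = v" unfolding v_def using apos bpos by simp
    have 2: "sort v = replicate m (sqrt b) @ [sqrt a]"
      by (rule properties_for_sort) (auto simp: v_def sorted_append ab real_sqrt_le_mono)
    show ?thesis unfolding sorted_abs_def by (simp only: 1 2) (simp add: v_def)
  qed
  have S: "sfun v p = inverse (a + real (min (p - 1) m) * b)" if p1: "p \<ge> 1" for p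
  proof -
    obtain p' where p': "p = Suc p'" using p1 by (cases p) auto
    show ?thesis unfolding sfun_def sa using apos bpos
      by (simp add: v_def p' sum_list_replicate min_def)
  qed
  have iab: "1 / (a * b) \<le> 2 * K"
  proof -
    have "1 / (a * b) = N * N * M / (N - 1)" unfolding aN bN using N2 Mpos by (simp add: field_simps)
    also have "\<dots> \<le> 2 * (N * M)"
    proof -
      have "N * (N * M) \<le> 2 * (N - 1) * (N * M)" using N2 Mpos
        by (intro mult_right_mono) auto
      thus ?thesis using N2 by (simp add: field_simps)
    qed
    also have "\<dots> \<le> 2 * K" using MNK by (simp add: mult.commute)
    finally show ?thesis .
  qed
  have Ap: "real p * (sfun v p)^2 \<le> 2 * K" if p: "p \<in> {1..k}" for p
  proof (cases "p - 1 \<le> m")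
    case True
    define S where "S = a + (real p - 1) * b"
    have sv: "sfun v p = inverse S" using S p True unfolding S_def by (simp add: of_nat_diff)
    have p1: "real p \<ge> 1" using p by simp
    have Sa: "S \<ge> a" unfolding S_def using p1 bpos by simp
    have Sb: "S \<ge> real p * b" unfolding S_def using ab by (simp add: algebra_simps)
    have "a * (real p * b) \<le> S * S" using Sa Sb apos bpos p1
      by (intro mult_mono) auto
    moreover have "S > 0" using Sa apos by simp
    ultimately have "real p / (S * S) \<le> real p / (a * (real p * b))" using apos bpos p1
      by (intro divide_left_mono) auto
    also have "\<dots> = 1 / (a * b)" using p1 by (simp add: field_simps)
    finally show ?thesis using iab sv by (simp add: power2_eq_square field_simps)
  next
    case False
    hence "sfun v p = 1" using S[of p] p sum1 M_def by (simp add: min_def)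
    thus ?thesis using p K_def by simp
  qed
  have k1: "k \<ge> 1" using k2n n2 by linarith
  have ne: "{1..k} \<noteq> {}" using k1 by auto
  show "A_val k (sfun v) \<le> 2 * real k"
    unfolding A_val_def using Ap ne K_def by (auto simp: Max_le_iff)
  have "sfun v 1 = inverse a" using S[of 1] by simp
  hence "0 < real 1 * (sfun v 1)^2" using apos by simp
  also have "real 1 * (sfun v 1)^2 \<le> A_val k (sfun v)"
    unfolding A_val_def using k1 by (intro Max_ge) (auto intro!: image_eqI[where x=1])
  finally show "A_val k (sfun v) > 0" .
  have M4: "N * K \<le> 4 * M^2"
  proof -
    have Kpos: "K \<ge> 0" using K_def by simp
    have "K * K \<le> (2 * M * N) * (2 * M * N)" using MNK2 Kpos by (intro mult_mono) auto
    moreover have "K * N^4 \<le> K * K" using KN4 Kpos by (intro mult_left_mono) auto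
    moreover have "N^3 * K \<le> N^4 * K" using N2 Kpos
      by (intro mult_right_mono) (auto simp: power_increasing)
    ultimately have "N^2 * (N * K) \<le> N^2 * (4 * M^2)"
      by (simp add: power2_eq_square power3_eq_cube power4_eq_xxxx algebra_simps)
    thus ?thesis using N2 by (simp add: mult_le_cancel_left_pos)
  qed
  have binv: "1 / (2 * b) \<ge> M / 2" unfolding bN using N2 Mpos by (simp add: field_simps)
  have Bq: "max ((real q)^2 * (sfun v q)^2) (real k * sfun v q) \<ge> real n * real k / 16"
    if q: "q \<in> {1..k}" for q
  proof (cases "q - 1 \<le> m")
    case True
    define S where "S = a + (real q - 1) * b"
    have sv: "sfun v q = inverse S" using S q True unfolding S_def by (simp add: of_nat_diff)
    have q1: "real q \<ge> 1" using q by simp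
    have Sa: "S \<ge> a" unfolding S_def using q1 bpos by simp
    have Spos: "S > 0" using Sa apos by simp
    show ?thesis
    proof (cases "(real q - 1) * b \<le> a")
      case True
      hence "S \<le> 2 * a" unfolding S_def by simp
      hence "K / (2 * a) \<le> K / S" using Spos K_def by (intro divide_left_mono) auto
      moreover have "K / (2 * a) = N * K / 2" unfolding aN using N2 by simp
      moreover have "N * K / 16 \<le> N * K / 2" using N2 K_def by simp
      ultimately have "N * K / 16 \<le> K / S" by linarith
      hence "N * K / 16 \<le> real k * sfun v q" using sv K_def by (simp add: field_simps)
      thus ?thesis using N_def K_def by (simp add: le_max_iff_disj)
    next
      case False
      hence "S \<le> 2 * (real q * b)" unfolding S_def using bpos by (simp add: algebra_simps)
      hence "real q / (2 * (real q * b)) \<le> real q / S" using Spos q1 bpos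
        by (intro divide_left_mono) auto
      moreover have "real q / (2 * (real q * b)) = 1 / (2 * b)" using q1 by simp
      ultimately have "M / 2 \<le> real q / S" using binv by linarith
      hence "(M / 2)^2 \<le> (real q / S)^2" using Mpos by (intro power_mono) auto
      hence "N * K / 16 \<le> (real q)^2 * (sfun v q)^2" using M4 sv
        by (simp add: power_divide field_simps)
      thus ?thesis using N_def K_def by simp
    qed
  next
    case False
    hence "sfun v q = 1" using S[of q] q sum1 M_def by (simp add: min_def)
    moreover have "M \<le> real q" using False M_def by simp
    hence "M^2 \<le> (real q)^2" using Mpos by (intro power_mono) auto
    ultimately show ?thesis using M4 N_def K_def by simp
  qed
  show "B_val k (sfun v) \<ge> real n * real k / 16"
    unfolding B_val_def using Bq ne by (intro Min.boundedI) auto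
qed
definition nk :: "nat \<Rightarrow> nat" where "nk k = floor_sqrt (floor_sqrt k)"

definition Vc :: "nat \<Rightarrow> real list" where
  "Vc k = (if nk k \<ge> 2 then sqrt (1 / real (nk k)) # replicate (k div nk k)
      (sqrt ((1 - 1 / real (nk k)) / real (k div nk k))) else [1])"

lemma nk4: "(nk k)^4 \<le> k"
proof -
  have "(nk k)^4 = ((nk k)^2)^2" by (simp add: power_mult[symmetric])
  also have "\<dots> \<le> (floor_sqrt k)^2" unfolding nk_def by (intro power_mono) auto
  also have "\<dots> \<le> k" by simp
  finally show ?thesis .
qed

lemma nk_ge: "N^4 \<le> k \<Longrightarrow> N \<le> nk k"
  unfolding nk_def le_floor_sqrt_iff by (simp add: power_mult[symmetric])

lemma Vc_props:
  assumes "nk k \<ge> 2"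
  shows "unit_vec (Vc k)" "nnz (Vc k) \<le> k" "A_val k (sfun (Vc k)) \<le> 2 * real k"
    "A_val k (sfun (Vc k)) > 0" "B_val k (sfun (Vc k)) \<ge> real (nk k) * real k / 16"
  using constr[OF assms nk4 refl] assms unfolding Vc_def by auto

theorem theorem3:
  shows "(\<forall>(k::nat) (v::real list). k \<ge> 1 \<longrightarrow> unit_vec v \<longrightarrow> nnz v \<le> k \<longrightarrow>
            A_val k (sfun v) \<le> B_val k (sfun v))
       \<and> (\<exists>V :: nat \<Rightarrow> real list.
            (\<forall>k\<ge>1. unit_vec (V k) \<and> nnz (V k) \<le> k) \<and>
            filterlim (\<lambda>k. B_val k (sfun (V k)) / A_val k (sfun (V k))) at_top sequentially)"
proof (intro conjI allI impI)
  fix k :: nat and v :: "real list"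
  assume k: "k \<ge> 1" and u: "unit_vec v" and nz: "nnz v \<le> k"
  note G = part_i_g[OF u nz]
  show "A_val k (sfun v) \<le> B_val k (sfun v)"
    unfolding G(5) by (rule part_i_abstract[OF G(1) G(2) G(3) G(4) k])
next
  show "\<exists>V :: nat \<Rightarrow> real list.
            (\<forall>k\<ge>1. unit_vec (V k) \<and> nnz (V k) \<le> k) \<and>
            filterlim (\<lambda>k. B_val k (sfun (V k)) / A_val k (sfun (V k))) at_top sequentially"
  proof (intro exI conjI allI impI)
    fix k :: nat assume k: "k \<ge> 1"
    show "unit_vec (Vc k)"
    proof (cases "nk k \<ge> 2")
      case True thus ?thesis using Vc_props by blast
    qed (simp add: Vc_def unit_vec_def)
    show "nnz (Vc k) \<le> k"
    proof (cases "nk k \<ge> 2")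
      case True thus ?thesis using Vc_props by blast
    qed (use k in \<open>simp add: Vc_def nnz_def\<close>)
  next
    have lim: "filterlim (\<lambda>k. real (nk k) / 32) at_top sequentially"
    proof (subst filterlim_at_top, intro allI)
      fix Z :: real
      define N where "N = nat \<lceil>32 * Z\<rceil>"
      show "eventually (\<lambda>k. Z \<le> real (nk k) / 32) sequentially"
        unfolding eventually_sequentially
      proof (intro exI allI impI)
        fix k assume "N^4 \<le> k"
        hence "N \<le> nk k" by (rule nk_ge)
        hence "real N \<le> real (nk k)" by simp
        moreover have "32 * Z \<le> real N" unfolding N_def by linarith
        ultimately show "Z \<le> real (nk k) / 32" by simp
      qed
    qed
    show "filterlim (\<lambda>k. B_val k (sfun (Vc k)) / A_val k (sfun (Vc k))) at_top sequentially"
    proof (rule filterlim_at_top_mono[OF lim])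
      show "eventually (\<lambda>k. real (nk k) / 32 \<le> B_val k (sfun (Vc k)) / A_val k (sfun (Vc k))) sequentially"
        unfolding eventually_sequentially
      proof (intro exI allI impI)
        fix k :: nat assume k16: "2^4 \<le> k"
        have n2: "nk k \<ge> 2" by (rule nk_ge[OF k16])
        note P = Vc_props[OF n2]
        have kpos: "real k > 0" using k16 by simp
        have "real (nk k) / 32 = (real (nk k) * real k / 16) / (2 * real k)" using kpos by simp
        also have "\<dots> \<le> B_val k (sfun (Vc k)) / (2 * real k)"
          using P(5) kpos by (intro divide_right_mono) auto
        also have "\<dots> \<le> B_val k (sfun (Vc k)) / A_val k (sfun (Vc k))"
        proof (rule divide_left_mono)
          show "0 \<le> B_val k (sfun (Vc k))" using P(5) by (smt (verit) of_nat_0_le_iff divide_nonneg_pos mult_nonneg_nonneg)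
        qed (use P(3) P(4) kpos in auto)
        finally show "real (nk k) / 32 \<le> B_val k (sfun (Vc k)) / A_val k (sfun (Vc k))" .
      qed
    qed
  qed
qed

end
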